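(* Let $(G,\precsim)$ be a compatible quasi-ordered abelian group and $H$ a $\precsim$-convex subgroup of $G$. Then for all $g_1,g_2\in G$ with $g_1-g_2\notin H$ and $g_1\precsim g_2$, and all $h_1,h_2\in H$, we have $g_1+h_1\precsim g_2+h_2$. Consequently the relation on $G/H$ defined by $g+H\precsim h+H\Leftrightarrow g-h\in H\vee(g-h\notin H\wedge g\precsim h)$ is a well-defined total quasi-order on $G/H$; moreover $(G/H,\precsim)$ is again a compatible quasi-ordered abelian group, and the canonical projection $G\to G/H$ is a homomorphism of quasi-ordered groups.
   Context: A compatible quasi-ordered abelian group is an abelian group $G$ with a total quasi-order $\precsim$ (reflexive, transitive, any two elements comparable) such that, writing $a\sim b$ for $a\precsim b\wedge b\precsim a$: $(Q_1)$ $x\sim0\Rightarrow x=0$; $(Q_2)$ $x\precsim y\wedge y\not\sim z\Rightarrow x+z\precsim y+z$, for all $x,y,z$. $S$ is $\precsim$-convex if $s,t\in S$, $s\precsim a\precsim t$ imply $a\in S$. A homomorphism of quasi-ordered groups is a group homomorphism $\phi$ with $g_1\precsim g_2\Rightarrow\phi(g_1)\precsim\phi(g_2)$. *)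

theory Defs
  imports "HOL-Algebra.Algebra"
begin

text \<open>Abelian groups are HOL-Algebra commutative groups (written multiplicatively:
  the paper's x + y is x \<otimes> y, 0 is \<one>, -y is inv y).\<close>

definition total_quasi_order_on :: "'a set \<Rightarrow> ('a \<Rightarrow> 'a \<Rightarrow> bool) \<Rightarrow> bool" where
  "total_quasi_order_on A qle \<longleftrightarrow>
     (\<forall>x\<in>A. qle x x) \<and>
     (\<forall>x\<in>A. \<forall>y\<in>A. \<forall>z\<in>A. qle x y \<longrightarrow> qle y z \<longrightarrow> qle x z) \<and>
     (\<forall>x\<in>A. \<forall>y\<in>A. qle x y \<or> qle y x)"

definition qo_equiv :: "('a \<Rightarrow> 'a \<Rightarrow> bool) \<Rightarrow> 'a \<Rightarrow> 'a \<Rightarrow> bool" where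
  "qo_equiv qle x y \<longleftrightarrow> qle x y \<and> qle y x"

definition cqo_group :: "('a, 'm) monoid_scheme \<Rightarrow> ('a \<Rightarrow> 'a \<Rightarrow> bool) \<Rightarrow> bool" where
  "cqo_group G qle \<longleftrightarrow>
     comm_group G \<and>
     total_quasi_order_on (carrier G) qle \<and>
     (\<forall>x\<in>carrier G. qo_equiv qle x \<one>\<^bsub>G\<^esub> \<longrightarrow> x = \<one>\<^bsub>G\<^esub>) \<and>
     (\<forall>x\<in>carrier G. \<forall>y\<in>carrier G. \<forall>z\<in>carrier G.
        qle x y \<longrightarrow> \<not> qo_equiv qle y z \<longrightarrow> qle (x \<otimes>\<^bsub>G\<^esub> z) (y \<otimes>\<^bsub>G\<^esub> z))"

definition qo_convex :: "('a, 'm) monoid_scheme \<Rightarrow> ('a \<Rightarrow> 'a \<Rightarrow> bool) \<Rightarrow> 'a set \<Rightarrow> bool" where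
  "qo_convex G qle S \<longleftrightarrow>
     (\<forall>s\<in>S. \<forall>t\<in>S. \<forall>a\<in>carrier G. qle s a \<longrightarrow> qle a t \<longrightarrow> a \<in> S)"

definition qo_hom :: "('a, 'm) monoid_scheme \<Rightarrow> ('a \<Rightarrow> 'a \<Rightarrow> bool) \<Rightarrow>
                      ('b, 'n) monoid_scheme \<Rightarrow> ('b \<Rightarrow> 'b \<Rightarrow> bool) \<Rightarrow> ('a \<Rightarrow> 'b) \<Rightarrow> bool" where
  "qo_hom G qleG K qleK \<phi> \<longleftrightarrow>
     \<phi> \<in> hom G K \<and> (\<forall>g1\<in>carrier G. \<forall>g2\<in>carrier G. qleG g1 g2 \<longrightarrow> qleK (\<phi> g1) (\<phi> g2))"

definition quot_le :: "('a, 'm) monoid_scheme \<Rightarrow> ('a \<Rightarrow> 'a \<Rightarrow> bool) \<Rightarrow> 'a set \<Rightarrow> 'a set \<Rightarrow> 'a set \<Rightarrow> bool" where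
  "quot_le G qle H A B \<longleftrightarrow>
     (\<exists>g\<in>carrier G. \<exists>h\<in>carrier G. A = H #>\<^bsub>G\<^esub> g \<and> B = H #>\<^bsub>G\<^esub> h \<and>
        (g \<otimes>\<^bsub>G\<^esub> inv\<^bsub>G\<^esub> h \<in> H \<or> (g \<otimes>\<^bsub>G\<^esub> inv\<^bsub>G\<^esub> h \<notin> H \<and> qle g h)))"

end

theory Submission
  imports Defs
begin

locale cqoH = comm_group G for G (structure) +
  fixes le :: "'a \<Rightarrow> 'a \<Rightarrow> bool" and H :: "'a set"
  assumes refl: "x \<in> carrier G \<Longrightarrow> le x x"
  and trans: "\<lbrakk>x \<in> carrier G; y \<in> carrier G; z \<in> carrier G; le x y; le y z\<rbrakk> \<Longrightarrow> le x z"
  and total: "\<lbrakk>x \<in> carrier G; y \<in> carrier G\<rbrakk> \<Longrightarrow> le x y \<or> le y x"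
  and Q1: "\<lbrakk>x \<in> carrier G; le x \<one>; le \<one> x\<rbrakk> \<Longrightarrow> x = \<one>"
  and Q2: "\<lbrakk>x \<in> carrier G; y \<in> carrier G; z \<in> carrier G; le x y; \<not> (le y z \<and> le z y)\<rbrakk>
            \<Longrightarrow> le (x \<otimes> z) (y \<otimes> z)"
  and sub: "subgroup H G"
  and conv: "\<lbrakk>s \<in> H; t \<in> H; a \<in> carrier G; le s a; le a t\<rbrakk> \<Longrightarrow> a \<in> H"
begin

lemma Hc: "h \<in> H \<Longrightarrow> h \<in> carrier G"
  by (rule subgroup.mem_carrier[OF sub])

lemma Hm: "a \<in> H \<Longrightarrow> b \<in> H \<Longrightarrow> a \<otimes> b \<in> H"
  by (rule subgroup.m_closed[OF sub])

lemma Hi: "a \<in> H \<Longrightarrow> inv a \<in> H"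
  by (rule subgroup.m_inv_closed[OF sub])

lemma H1: "\<one> \<in> H"
  by (rule subgroup.one_closed[OF sub])

lemma Hcancel: "a \<in> carrier G \<Longrightarrow> b \<in> H \<Longrightarrow> a \<otimes> b \<in> H \<Longrightarrow> a \<in> H"
proof -
  assume a: "a \<in> carrier G" and b: "b \<in> H" and ab: "a \<otimes> b \<in> H"
  have "a = (a \<otimes> b) \<otimes> inv b" using a Hc[OF b] by (simp add: m_assoc)
  thus ?thesis using Hm[OF ab Hi[OF b]] by simp
qed

lemma eqH: "a \<in> carrier G \<Longrightarrow> h \<in> H \<Longrightarrow> le a h \<Longrightarrow> le h a \<Longrightarrow> a \<in> H"
  using conv by blast

lemma SQ2: "\<lbrakk>x \<in> carrier G; y \<in> carrier G; z \<in> carrier G; \<not> le y x;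
   \<not> (le (x \<otimes> z) (inv z) \<and> le (inv z) (x \<otimes> z))\<rbrakk> \<Longrightarrow> \<not> le (y \<otimes> z) (x \<otimes> z)"
proof
  assume x: "x \<in> carrier G" and y: "y \<in> carrier G" and z: "z \<in> carrier G" and n: "\<not> le y x"
    and c: "\<not> (le (x \<otimes> z) (inv z) \<and> le (inv z) (x \<otimes> z))" and l: "le (y \<otimes> z) (x \<otimes> z)"
  have "le (y \<otimes> z \<otimes> inv z) (x \<otimes> z \<otimes> inv z)"
    using Q2[OF _ _ _ l c] x y z by simp
  thus False using n x y z by (simp add: m_assoc)
qed

lemma C: assumes e: "e \<in> carrier G" "e \<notin> H" and k: "k \<in> H" and l1: "le e \<one>" and l2: "le \<one> (e \<otimes> k)"
  shows False
proof (cases "k = \<one>")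
  case True
  then show ?thesis using Q1 e l1 l2 H1 by auto
next
  case False
  have kc: "k \<in> carrier G" using Hc k .
  have "\<not> (le \<one> k \<and> le k \<one>)" using Q1 kc False by blast
  hence "le (e \<otimes> k) (\<one> \<otimes> k)" using Q2[OF e(1) one_closed kc l1] by blast
  hence "e \<otimes> k \<in> H" using conv[OF H1 k _ l2] e kc by simp
  thus False using Hcancel e k by blast
qed

lemma C2: assumes e: "e \<in> carrier G" "e \<notin> H" and k: "k \<in> H" and h: "h1 \<in> H" "h2 \<in> H"
  and l1: "le e h1" and l2: "le h2 (e \<otimes> k)"
  shows False
proof -
  have kc: "k \<in> carrier G" using Hc k .
  have "le e \<one>"
  proof (rule ccontr)
    assume "\<not> le e \<one>"
    hence "le \<one> e" using total e by blast
    thus False using conv[OF H1 h(1) e(1) _ l1] e by blast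
  qed
  moreover have "le \<one> (e \<otimes> k)"
  proof (rule ccontr)
    assume "\<not> le \<one> (e \<otimes> k)"
    hence "le (e \<otimes> k) \<one>" using total e kc by blast
    hence "e \<otimes> k \<in> H" using conv[OF h(2) H1 _ l2] e kc by blast
    thus False using Hcancel e k by blast
  qed
  ultimately show False using C[OF e k] by blast
qed

lemma R: assumes x: "x \<in> carrier G" and y: "y \<in> carrier G" and l: "le x y"
  and d: "x \<otimes> inv y \<notin> H" and k: "k \<in> H"
  shows "le x (y \<otimes> k)"
proof (rule ccontr)
  assume n: "\<not> le x (y \<otimes> k)"
  have kc: "k \<in> carrier G" using Hc k .
  have ykc: "y \<otimes> k \<in> carrier G" using y kc by simp
  have l2: "le (y \<otimes> k) x" using n total x ykc by blast
  show False
  proof (cases "y \<in> H")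
    case True
    hence "x \<in> H" using conv[OF Hm[OF True k] True x l2 l] by blast
    thus False using d True Hm Hi by blast
  next
    case yH: False
    define m where "m = inv (y \<otimes> k)"
    have mc: "m \<in> carrier G" using m_def ykc by simp
    have ykH: "y \<otimes> k \<notin> H" using Hcancel y k yH by blast
    show False
    proof (cases "le y m \<and> le m y")
      case False
      have c1: "\<not> (le ((y \<otimes> k) \<otimes> m) (inv m) \<and> le (inv m) ((y \<otimes> k) \<otimes> m))"
      proof
        assume a: "le ((y \<otimes> k) \<otimes> m) (inv m) \<and> le (inv m) ((y \<otimes> k) \<otimes> m)"
        have "(y \<otimes> k) \<otimes> m = \<one>" "inv m = y \<otimes> k" using m_def ykc by simp_all
        hence "y \<otimes> k = \<one>" using a Q1 ykc by metis
        thus False using ykH H1 by simp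
      qed
      have s1: "\<not> le (x \<otimes> m) ((y \<otimes> k) \<otimes> m)" using SQ2[OF ykc x mc n c1] .
      have e1: "(y \<otimes> k) \<otimes> m = \<one>" using m_def ykc by simp
      have s2: "le (x \<otimes> m) (y \<otimes> m)" using Q2[OF x y mc l False] .
      have e2: "y \<otimes> m = inv k" using m_def y kc by (simp add: inv_mult m_assoc[symmetric])
      have "le \<one> (x \<otimes> m)" using s1 e1 total[of "x \<otimes> m" "\<one>"] x mc by auto
      hence "x \<otimes> m \<in> H" using conv[OF H1 Hi[OF k] _ _ ] s2 e2 x mc by simp
      moreover have "x \<otimes> m = x \<otimes> inv y \<otimes> inv k" using m_def x y kc by (simp add: inv_mult m_ac)
      ultimately show False using Hcancel d Hi[OF k] x y by (metis inv_closed m_closed)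
    next
      case ym: True
      show False
      proof (cases "le y (inv y) \<and> le (inv y) y")
        case False
        have c1: "\<not> (le ((y \<otimes> k) \<otimes> inv y) (inv (inv y)) \<and> le (inv (inv y)) ((y \<otimes> k) \<otimes> inv y))"
        proof
          assume a: "le ((y \<otimes> k) \<otimes> inv y) (inv (inv y)) \<and> le (inv (inv y)) ((y \<otimes> k) \<otimes> inv y)"
          have "(y \<otimes> k) \<otimes> inv y = k" using y kc by (simp add: m_ac)
          hence "le k y \<and> le y k" using a y by simp
          thus False using eqH[OF y k] yH by blast
        qed
        have s1: "\<not> le (x \<otimes> inv y) ((y \<otimes> k) \<otimes> inv y)" using SQ2[OF ykc x _ n c1] y by simp
        have e1: "(y \<otimes> k) \<otimes> inv y = k" using y kc by (simp add: m_ac)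
        have s2: "le (x \<otimes> inv y) (y \<otimes> inv y)" using Q2[OF x y _ l False] y by simp
        have "le k (x \<otimes> inv y)" using s1 e1 total[of "x \<otimes> inv y" k] x y kc by auto
        hence "x \<otimes> inv y \<in> H" using conv[OF k H1] s2 x y by simp
        thus False using d by simp
      next
        case True
        define w where "w = inv y"
        have wc: "w \<in> carrier G" using w_def y by simp
        have wH: "w \<notin> H" using w_def yH Hi y by (metis inv_inv)
        have e: "m = w \<otimes> inv k" using m_def w_def y kc by (simp add: inv_mult)
        have "le w m" using trans[OF wc y mc] True ym w_def by blast
        hence l3: "le (w \<otimes> inv k) w" using e trans[OF _ y wc] ym True w_def e mc wc by metis
        have "\<not> (le w k \<and> le k w)" using eqH[OF wc k] wH by blast
        hence "le (w \<otimes> inv k \<otimes> k) (w \<otimes> k)" using Q2[OF _ wc kc l3] wc kc by simp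
        hence l4: "le w (w \<otimes> k)" using wc kc by (simp add: m_assoc)
        have "\<not> (le y k \<and> le k y)" using eqH[OF y k] yH by blast
        hence l5: "le (w \<otimes> k) (y \<otimes> k)" using Q2[OF wc y kc] True w_def by blast
        have "le y w" using True w_def by simp
        hence "le y (y \<otimes> k)" using trans[OF y wc ykc _ trans[OF wc _ ykc l4 l5]] wc kc by simp
        thus False using trans[OF x y ykc l] n by blast
      qed
    qed
  qed
qed

lemma L: assumes x: "x \<in> carrier G" and y: "y \<in> carrier G" and l: "le x y"
  and d: "x \<otimes> inv y \<notin> H" and k: "k \<in> H"
  shows "le (x \<otimes> k) y"
proof (cases "y \<in> H")
  case False
  have kc: "k \<in> carrier G" using Hc k .
  have "le x (y \<otimes> inv k)" using R[OF x y l d Hi[OF k]] .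
  moreover have "\<not> (le (y \<otimes> inv k) k \<and> le k (y \<otimes> inv k))"
  proof
    assume "le (y \<otimes> inv k) k \<and> le k (y \<otimes> inv k)"
    hence "y \<otimes> inv k \<in> H" using eqH[OF m_closed[OF y inv_closed[OF kc]] k] by blast
    thus False using Hcancel[OF y Hi[OF k]] False by blast
  qed
  ultimately have "le (x \<otimes> k) (y \<otimes> inv k \<otimes> k)" using Q2 x y kc by simp
  thus ?thesis using y kc by (simp add: m_assoc)
next
  case True
  have kc: "k \<in> carrier G" using Hc k .
  have xH: "x \<notin> H" using d True Hm Hi by blast
  show ?thesis
  proof (rule ccontr)
    assume "\<not> le (x \<otimes> k) y"
    hence "le y (x \<otimes> k)" using total x y kc by blast
    thus False using C2[OF x xH k True True l] by blast
  qed
qed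

lemma part1: assumes g: "g1 \<in> carrier G" "g2 \<in> carrier G" and h: "h1 \<in> H" "h2 \<in> H"
  and d: "g1 \<otimes> inv g2 \<notin> H" and l: "le g1 g2"
  shows "le (g1 \<otimes> h1) (g2 \<otimes> h2)"
proof -
  have hc: "h1 \<in> carrier G" using Hc h by blast
  have a: "le (g1 \<otimes> h1) g2" using L[OF g l d h(1)] .
  have "g1 \<otimes> h1 \<otimes> inv g2 = (g1 \<otimes> inv g2) \<otimes> h1" using g hc by (simp add: m_ac)
  hence "g1 \<otimes> h1 \<otimes> inv g2 \<notin> H" using Hcancel d h g by (metis inv_closed m_closed)
  thus ?thesis using R[OF _ g(2) a _ h(2)] g hc by simp
qed


definition P where "P g h \<longleftrightarrow> (g \<otimes> inv h \<in> H \<or> (g \<otimes> inv h \<notin> H \<and> le g h))"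

lemma HG: "H \<subseteq> carrier G" using Hc by blast

lemma coset_eq: assumes g: "g \<in> carrier G" and h: "h \<in> carrier G"
  shows "(H #> g = H #> h) \<longleftrightarrow> g \<otimes> inv h \<in> H"
proof
  assume "H #> g = H #> h"
  hence "g \<in> H #> h" using rcos_self[OF g sub] by simp
  thus "g \<otimes> inv h \<in> H" using subgroup.rcos_module_imp[OF sub is_group h] by blast
next
  assume "g \<otimes> inv h \<in> H"
  hence "g \<in> H #> h" using subgroup.rcos_module_rev[OF sub is_group h g] by blast
  thus "H #> g = H #> h" using repr_independence[OF _ h sub] by simp
qed

lemma decomp: "g \<in> carrier G \<Longrightarrow> g' \<in> carrier G \<Longrightarrow> g' = g \<otimes> (g' \<otimes> inv g)"
  by (metis m_lcomm inv_closed r_inv r_one)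

lemma P_cong: assumes g: "g \<in> carrier G" "g' \<in> carrier G" and h: "h \<in> carrier G" "h' \<in> carrier G"
  and a: "g' \<otimes> inv g \<in> H" and b: "h' \<otimes> inv h \<in> H" and p: "P g h"
  shows "P g' h'"
proof -
  define u where "u = g' \<otimes> inv g"
  define v where "v = h' \<otimes> inv h"
  have uc: "u \<in> carrier G" and vc: "v \<in> carrier G" using u_def v_def g h by auto
  have eg: "g' = g \<otimes> u" using decomp g u_def by blast
  have eh: "h' = h \<otimes> v" using decomp h v_def by blast
  have e: "g' \<otimes> inv h' = (g \<otimes> inv h) \<otimes> (u \<otimes> inv v)" using eg eh g h uc vc by (simp add: inv_mult m_ac)
  have uvH: "u \<otimes> inv v \<in> H" using a b u_def v_def Hm Hi by blast
  have iff: "g' \<otimes> inv h' \<in> H \<longleftrightarrow> g \<otimes> inv h \<in> H"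
    using e uvH Hcancel Hm g h by (metis inv_closed m_closed)
  show ?thesis
  proof (cases "g \<otimes> inv h \<in> H")
    case True thus ?thesis using iff P_def by blast
  next
    case False
    hence "le g h" using p P_def by blast
    hence "le (g \<otimes> u) (h \<otimes> v)" using part1[OF g(1) h(1)] a b u_def v_def False by blast
    thus ?thesis using iff False eg eh P_def by blast
  qed
qed

lemma Qiff: assumes g: "g \<in> carrier G" and h: "h \<in> carrier G"
  shows "quot_le G le H (H #> g) (H #> h) \<longleftrightarrow> P g h"
proof
  assume "quot_le G le H (H #> g) (H #> h)"
  then obtain g' h' where g': "g' \<in> carrier G" and h': "h' \<in> carrier G"
    and e1: "H #> g = H #> g'" and e2: "H #> h = H #> h'" and p: "P g' h'"
    unfolding quot_le_def P_def by blast
  show "P g h" using P_cong[OF g' g h' h _ _ p] e1 e2 coset_eq g h g' h' by blast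
next
  assume "P g h" thus "quot_le G le H (H #> g) (H #> h)" unfolding quot_le_def P_def using g h by blast
qed

lemma rep: assumes "M \<in> carrier (G Mod H)" obtains g where "g \<in> carrier G" "M = H #> g"
  using assms unfolding carrier_FactGroup by blast

lemma P_refl: "g \<in> carrier G \<Longrightarrow> P g g" using P_def H1 by simp

lemma P_trans: assumes g: "g \<in> carrier G" and h: "h \<in> carrier G" and c: "c \<in> carrier G"
  and p1: "P g h" and p2: "P h c" shows "P g c"
proof (cases "h \<otimes> inv c \<in> H")
  case True
  have "c \<otimes> inv h \<in> H" using Hi[OF True] h c by (simp add: inv_mult m_comm[of "inv h" c])
  thus ?thesis using P_cong[OF g g h c _ _ p1] g H1 by simp
next
  case F1: False
  show ?thesis
  proof (cases "g \<otimes> inv h \<in> H")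
    case True
    thus ?thesis using P_cong[OF h g c c _ _ p2] c H1 by simp
  next
    case False
    hence "le g h" "le h c" using p1 p2 F1 P_def by auto
    thus ?thesis using trans[OF g h c] P_def by blast
  qed
qed

lemma P_total: "g \<in> carrier G \<Longrightarrow> h \<in> carrier G \<Longrightarrow> P g h \<or> P h g"
  using total P_def by blast

lemma main: "(\<forall>g1\<in>carrier G. \<forall>g2\<in>carrier G. \<forall>h1\<in>H. \<forall>h2\<in>H.
            g1 \<otimes> inv g2 \<notin> H \<longrightarrow> le g1 g2 \<longrightarrow>
            le (g1 \<otimes> h1) (g2 \<otimes> h2))
      \<and> (\<forall>g\<in>carrier G. \<forall>h\<in>carrier G.
            quot_le G le H (H #> g) (H #> h) \<longleftrightarrow>
              (g \<otimes> inv h \<in> H \<or> (g \<otimes> inv h \<notin> H \<and> le g h)))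
      \<and> total_quasi_order_on (carrier (G Mod H)) (quot_le G le H)
      \<and> cqo_group (G Mod H) (quot_le G le H)
      \<and> qo_hom G le (G Mod H) (quot_le G le H) (\<lambda>g. H #> g)"
proof -
  have nor: "H \<lhd> G" using subgroup_imp_normal sub by blast
  have car: "carrier (G Mod H) = (\<lambda>x. H #> x) ` carrier G" by (rule carrier_FactGroup)
  have tq: "total_quasi_order_on (carrier (G Mod H)) (quot_le G le H)"
    unfolding total_quasi_order_on_def
  proof (intro conjI ballI impI)
    fix x assume hx: "x \<in> carrier (G Mod H)"
    obtain g where g: "g \<in> carrier G" and x: "x = H #> g" using rep[OF hx] .
    show "quot_le G le H x x" using Qiff[OF g g] P_refl[OF g] x by simp
  next
    fix x y z assume hx: "x \<in> carrier (G Mod H)" and hy: "y \<in> carrier (G Mod H)" and hz: "z \<in> carrier (G Mod H)"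
    obtain g where g: "g \<in> carrier G" and x: "x = H #> g" using rep[OF hx] .
    obtain h where h: "h \<in> carrier G" and y: "y = H #> h" using rep[OF hy] .
    obtain c where c: "c \<in> carrier G" and z: "z = H #> c" using rep[OF hz] .
    assume "quot_le G le H x y" "quot_le G le H y z"
    hence "P g h" "P h c" using Qiff g h c x y z by simp_all
    hence "P g c" by (rule P_trans[OF g h c])
    thus "quot_le G le H x z" using Qiff[OF g c] x z by simp
  next
    fix x y assume hx: "x \<in> carrier (G Mod H)" and hy: "y \<in> carrier (G Mod H)"
    obtain g where g: "g \<in> carrier G" and x: "x = H #> g" using rep[OF hx] .
    obtain h where h: "h \<in> carrier G" and y: "y = H #> h" using rep[OF hy] .
    show "quot_le G le H x y \<or> quot_le G le H y x" using P_total[OF g h] Qiff[OF g h] Qiff[OF h g] x y by simp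
  qed
  have q1: "\<forall>x\<in>carrier (G Mod H). qo_equiv (quot_le G le H) x \<one>\<^bsub>G Mod H\<^esub> \<longrightarrow> x = \<one>\<^bsub>G Mod H\<^esub>"
  proof
    fix x assume hx: "x \<in> carrier (G Mod H)"
    obtain g where g: "g \<in> carrier G" and x: "x = H #> g" using rep[OF hx] .
    have one: "\<one>\<^bsub>G Mod H\<^esub> = H #> \<one>" using HG by simp
    show "qo_equiv (quot_le G le H) x \<one>\<^bsub>G Mod H\<^esub> \<longrightarrow> x = \<one>\<^bsub>G Mod H\<^esub>"
    proof
      assume "qo_equiv (quot_le G le H) x \<one>\<^bsub>G Mod H\<^esub>"
      hence "quot_le G le H (H #> g) (H #> \<one>)" "quot_le G le H (H #> \<one>) (H #> g)"
        using x one unfolding qo_equiv_def by simp_all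
      hence "P g \<one>" "P \<one> g" using Qiff[OF g one_closed] Qiff[OF one_closed g] by simp_all
      hence p1: "P g \<one>" and p2: "P \<one> g" by simp_all
      have "g \<in> H"
      proof (rule ccontr)
        assume gH: "g \<notin> H"
        hence "le g \<one>" using p1 g unfolding P_def by simp
        moreover have "inv g \<notin> H" using Hi[of "inv g"] gH g by auto
        hence "le \<one> g" using p2 g unfolding P_def by simp
        ultimately have "g = \<one>" using Q1 g by blast
        thus False using gH H1 by simp
      qed
      thus "x = \<one>\<^bsub>G Mod H\<^esub>" using x coset_join2[OF g sub] by simp
    qed
  qed
  have q2: "\<forall>x\<in>carrier (G Mod H). \<forall>y\<in>carrier (G Mod H). \<forall>z\<in>carrier (G Mod H).
        quot_le G le H x y \<longrightarrow> \<not> qo_equiv (quot_le G le H) y z \<longrightarrow>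
        quot_le G le H (x \<otimes>\<^bsub>G Mod H\<^esub> z) (y \<otimes>\<^bsub>G Mod H\<^esub> z)"
  proof (intro ballI impI)
    fix x y z assume hx: "x \<in> carrier (G Mod H)" and hy: "y \<in> carrier (G Mod H)" and hz: "z \<in> carrier (G Mod H)"
    obtain g where g: "g \<in> carrier G" and x: "x = H #> g" using rep[OF hx] .
    obtain h where h: "h \<in> carrier G" and y: "y = H #> h" using rep[OF hy] .
    obtain c where c: "c \<in> carrier G" and z: "z = H #> c" using rep[OF hz] .
    assume xy: "quot_le G le H x y" and ne: "\<not> qo_equiv (quot_le G le H) y z"
    have p: "P g h" using xy Qiff g h x y by simp
    have nhc: "\<not> (le h c \<and> le c h)"
    proof
      assume "le h c \<and> le c h"
      hence "P h c" "P c h" using P_def by auto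
      thus False using ne Qiff[OF h c] Qiff[OF c h] y z unfolding qo_equiv_def by simp
    qed
    have "(g \<otimes> c) \<otimes> inv (h \<otimes> c) = g \<otimes> (c \<otimes> (inv h \<otimes> inv c))"
      using g h c by (simp add: inv_mult m_assoc)
    also have "\<dots> = g \<otimes> (inv h \<otimes> (c \<otimes> inv c))" using g h c by (simp add: m_lcomm[of c "inv h"])
    also have "\<dots> = g \<otimes> inv h" using h c by simp
    finally have e: "(g \<otimes> c) \<otimes> inv (h \<otimes> c) = g \<otimes> inv h" .
    have "P (g \<otimes> c) (h \<otimes> c)"
    proof (cases "g \<otimes> inv h \<in> H")
      case True thus ?thesis using e P_def by simp
    next
      case False
      hence "le g h" using p P_def by blast
      hence "le (g \<otimes> c) (h \<otimes> c)" using Q2[OF g h c _ nhc] by blast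
      thus ?thesis using e P_def False by simp
    qed
    thus "quot_le G le H (x \<otimes>\<^bsub>G Mod H\<^esub> z) (y \<otimes>\<^bsub>G Mod H\<^esub> z)"
      using Qiff g h c x y z normal.rcos_sum[OF nor] by simp
  qed
  have cg: "cqo_group (G Mod H) (quot_le G le H)"
    unfolding cqo_group_def using abelian_FactGroup[OF sub] tq q1 q2 by blast
  have hom: "qo_hom G le (G Mod H) (quot_le G le H) (\<lambda>g. H #> g)"
    unfolding qo_hom_def using normal.r_coset_hom_Mod[OF nor] Qiff P_def by blast
  show ?thesis using part1 Qiff P_def tq cg hom by blast
qed

end

lemma to_cqoH: assumes "cqo_group G qle" and "subgroup H G" and "qo_convex G qle H"
  shows "cqoH G qle H"
proof (intro cqoH.intro cqoH_axioms.intro)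
  note a = assms[unfolded cqo_group_def total_quasi_order_on_def qo_equiv_def qo_convex_def]
  show "comm_group G" using a(1) by (elim conjE)
  show "subgroup H G" by (rule assms(2))
  fix x y z
  show "x \<in> carrier G \<Longrightarrow> qle x x" using a(1) by (elim conjE) (erule bspec)
  show "\<lbrakk>x \<in> carrier G; y \<in> carrier G; z \<in> carrier G; qle x y; qle y z\<rbrakk> \<Longrightarrow> qle x z"
    using a(1) by (elim conjE) metis
  show "\<lbrakk>x \<in> carrier G; y \<in> carrier G\<rbrakk> \<Longrightarrow> qle x y \<or> qle y x"
    using a(1) by (elim conjE) metis
  show "\<lbrakk>x \<in> carrier G; qle x \<one>\<^bsub>G\<^esub>; qle \<one>\<^bsub>G\<^esub> x\<rbrakk> \<Longrightarrow> x = \<one>\<^bsub>G\<^esub>"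
    using a(1) by (elim conjE) metis
  show "\<lbrakk>x \<in> carrier G; y \<in> carrier G; z \<in> carrier G; qle x y; \<not> (qle y z \<and> qle z y)\<rbrakk>
            \<Longrightarrow> qle (x \<otimes>\<^bsub>G\<^esub> z) (y \<otimes>\<^bsub>G\<^esub> z)"
    using a(1) by (elim conjE) metis
  fix s t a
  show "\<lbrakk>s \<in> H; t \<in> H; a \<in> carrier G; qle s a; qle a t\<rbrakk> \<Longrightarrow> a \<in> H"
    using assms(3) unfolding qo_convex_def by metis
qed

theorem mainTheorem9:
  fixes G :: "('a, 'm) monoid_scheme" and qle :: "'a \<Rightarrow> 'a \<Rightarrow> bool" and H :: "'a set"
  assumes "cqo_group G qle"
    and "subgroup H G"
    and "qo_convex G qle H"
  shows "(\<forall>g1\<in>carrier G. \<forall>g2\<in>carrier G. \<forall>h1\<in>H. \<forall>h2\<in>H.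
            g1 \<otimes>\<^bsub>G\<^esub> inv\<^bsub>G\<^esub> g2 \<notin> H \<longrightarrow> qle g1 g2 \<longrightarrow>
            qle (g1 \<otimes>\<^bsub>G\<^esub> h1) (g2 \<otimes>\<^bsub>G\<^esub> h2))
      \<and> (\<forall>g\<in>carrier G. \<forall>h\<in>carrier G.
            quot_le G qle H (H #>\<^bsub>G\<^esub> g) (H #>\<^bsub>G\<^esub> h) \<longleftrightarrow>
              (g \<otimes>\<^bsub>G\<^esub> inv\<^bsub>G\<^esub> h \<in> H \<or> (g \<otimes>\<^bsub>G\<^esub> inv\<^bsub>G\<^esub> h \<notin> H \<and> qle g h)))
      \<and> total_quasi_order_on (carrier (G Mod H)) (quot_le G qle H)
      \<and> cqo_group (G Mod H) (quot_le G qle H)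
      \<and> qo_hom G qle (G Mod H) (quot_le G qle H) (\<lambda>g. H #>\<^bsub>G\<^esub> g)"
  using cqoH.main[OF to_cqoH[OF assms]] .

end
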